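(* Let $n\ge1$, $k=\lfloor n/2\rfloor$, let $(p_j,u_j)$, $0\le j\le n$, be the coordinates of the trajectory $T_n$, and put $\lambda_j=1-u_j$. Then, with $\delta=1-(p_k-1)^2$, $$C_n=2\sum_{j=0}^{k-1}\bigl(3-p_j+u_j-2u_{j+1}-p_ju_j\bigr)+\delta=2\sum_{j=1}^{k}\frac{\lambda_j(\lambda_{j-1}-2\lambda_j)}{u_j}+\delta.$$
   Context: For $n\ge1$ and $\mathbf{x}=(x_1,\dots,x_n)\in(0,\infty)^n$ let $f_n(\mathbf{x})=\sum_{i=1}^n x_i+\sum_{1\le i\le j\le n}\prod_{k=i}^j \frac1{x_k}$, $A_n=\inf_{\mathbf{x}\in(0,\infty)^n} f_n(\mathbf{x})$, and $C_n=3n-A_n$. Let $\Phi$ be the partial map of $\mathbb{R}^2$ defined for $p\ne0$ by $\Phi(p,u)=\bigl(p^2(u+1)-1,\ 1/p\bigr)$. For $n\ge1$, the trajectory $T_n$ is the (existing and unique) finite sequence $(p_j,u_j)$, $j=0,\dots,n$, with $(p_j,u_j)=\Phi(p_{j-1},u_{j-1})$ for $1\le j\le n$, $u_0=0$, $p_n=0$, and $p_j>0$ for $0\le j\le n-1$. *)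

theory Defs
  imports Complex_Main
begin

text \<open>Vectors in (0,inf)^n are functions nat => real, with coordinates x 1, ..., x n.\<close>

definition f_fun :: "nat \<Rightarrow> (nat \<Rightarrow> real) \<Rightarrow> real" where
  "f_fun n x = (\<Sum>i=1..n. x i) + (\<Sum>i=1..n. \<Sum>j=i..n. \<Prod>k=i..j. 1 / x k)"

definition A_val :: "nat \<Rightarrow> real" where
  "A_val n = Inf {f_fun n x | x. \<forall>i\<in>{1..n}. x i > 0}"

definition C_val :: "nat \<Rightarrow> real" where
  "C_val n = 3 * real n - A_val n"

definition Phi :: "real \<times> real \<Rightarrow> real \<times> real" where
  "Phi = (\<lambda>(p, u). (p^2 * (u + 1) - 1, 1 / p))"

definition is_trajectory :: "nat \<Rightarrow> (nat \<Rightarrow> real) \<Rightarrow> (nat \<Rightarrow> real) \<Rightarrow> bool" where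
  "is_trajectory n p u \<longleftrightarrow>
     u 0 = 0 \<and> p n = 0 \<and> (\<forall>j<n. p j > 0) \<and>
     (\<forall>j\<in>{1..n}. (p j, u j) = Phi (p (j - 1), u (j - 1)))"

end

theory Submission imports Defs begin
lemma exp_strict: fixes y :: real assumes "y \<noteq> 0" shows "1 + y < exp y"
proof (cases "1 + y/2 \<ge> 0")
  case True
  have "(1 + y/2)^2 \<le> exp (y/2) ^ 2"
    using True exp_ge_add_one_self[of "y/2"] by (intro power_mono) auto
  also have "\<dots> = exp y" by (simp flip: exp_double)
  finally have a: "(1 + y/2)^2 \<le> exp y" .
  have b: "(1 + y/2)^2 = 1 + y + y^2/4" by (simp add: power2_eq_square algebra_simps)
  have "0 < y^2" using assms by simp
  then show ?thesis using a b by linarith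
next
  case False
  then show ?thesis using exp_gt_zero[of y] by linarith
qed

definition PP :: "(nat \<Rightarrow> real) \<Rightarrow> nat \<Rightarrow> nat \<Rightarrow> real" where
  "PP x i j = (\<Prod>k=i..j. 1 / x k)"

definition xs :: "(nat \<Rightarrow> real) \<Rightarrow> (nat \<Rightarrow> real) \<Rightarrow> nat \<Rightarrow> real" where
  "xs p u k = p (k - 1) * (1 + u (k - 1))"

lemma traj_facts:
  assumes "is_trajectory n p u"
  shows "u 0 = 0" "p n = 0" "\<And>j. j < n \<Longrightarrow> p j > 0"
    "\<And>j. j < n \<Longrightarrow> u (Suc j) = 1 / p j"
    "\<And>j. j < n \<Longrightarrow> p (Suc j) = p j ^ 2 * (u j + 1) - 1"
proof -
  show "u 0 = 0" "p n = 0" "\<And>j. j < n \<Longrightarrow> p j > 0" using assms by (auto simp: is_trajectory_def)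
  fix j assume "j < n"
  then have "Suc j \<in> {1..n}" by auto
  then have "(p (Suc j), u (Suc j)) = Phi (p j, u j)" using assms unfolding is_trajectory_def by fastforce
  then show "u (Suc j) = 1 / p j" "p (Suc j) = p j ^ 2 * (u j + 1) - 1" by (auto simp: Phi_def)
qed

lemma traj_u_nonneg:
  assumes "is_trajectory n p u" "j \<le> n" shows "u j \<ge> 0"
proof (cases j)
  case 0 then show ?thesis using traj_facts(1)[OF assms(1)] by simp
next
  case (Suc i)
  then have "i < n" using assms by simp
  then show ?thesis using Suc traj_facts(3,4)[OF assms(1), of i] by simp
qed

lemma traj_u_pos:
  assumes "is_trajectory n p u" "1 \<le> j" "j \<le> n" shows "u j > 0"
proof (cases j)
  case 0 then show ?thesis using assms by simp
next
  case (Suc i)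
  then have "i < n" using assms by simp
  then show ?thesis using Suc traj_facts(3,4)[OF assms(1), of i] by simp
qed

lemma traj_pu:
  assumes "is_trajectory n p u" "j < n" shows "p j * u (Suc j) = 1"
proof -
  have "p j > 0" using traj_facts(3)[OF assms(1) assms(2)] .
  then show ?thesis using traj_facts(4)[OF assms(1) assms(2)] by simp
qed

lemma xs_pos:
  assumes "is_trajectory n p u" "k \<in> {1..n}" shows "xs p u k > 0"
proof -
  have "p (k-1) > 0" "u (k-1) \<ge> 0" using assms traj_facts(3)[OF assms(1)] traj_u_nonneg[OF assms(1)] by auto
  then show ?thesis unfolding xs_def by (simp add: add_nonneg_pos)
qed

lemma PP_split:
  assumes "i \<le> Suc k" "k \<le> j"
  shows "PP x i j = PP x i k * PP x (Suc k) j"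
proof -
  have "{i..j} = {i..k} \<union> {Suc k..j}" using assms by auto
  moreover have "{i..k} \<inter> {Suc k..j} = {}" by auto
  ultimately show ?thesis unfolding PP_def by (simp add: prod.union_disjoint)
qed

lemma S_lemma:
  assumes "is_trajectory n p u" "j \<le> n"
  shows "(\<Sum>i=1..j. PP (xs p u) i j) = u j"
  using assms(2)
proof (induction j)
  case 0 then show ?case using traj_facts(1)[OF assms(1)] by simp
next
  case (Suc j)
  have jn: "j < n" using Suc by simp
  have pj: "p j > 0" using traj_facts(3)[OF assms(1) jn] .
  have uj: "u j \<ge> 0" using traj_u_nonneg[OF assms(1)] jn by simp
  have "(\<Sum>i=1..Suc j. PP (xs p u) i (Suc j)) = (\<Sum>i=1..j. PP (xs p u) i j * (1 / xs p u (Suc j))) + 1 / xs p u (Suc j)"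
    by (simp add: PP_def)
  also have "\<dots> = (u j + 1) / xs p u (Suc j)"
    using Suc by (simp flip: sum_divide_distrib add: add_divide_distrib)
  also have "\<dots> = 1 / p j"
  proof -
    have "1 + u j > 0" using uj by simp
    then show ?thesis using pj by (simp add: xs_def add.commute)
  qed
  also have "\<dots> = u (Suc j)" using traj_facts(4)[OF assms(1) jn] by simp
  finally show ?case .
qed

lemma R_lemma:
  assumes "is_trajectory n p u" "m \<le> n"
  shows "(\<Sum>j=Suc m..n. PP (xs p u) (Suc m) j) = p m"
  using assms(2)
proof (induction m rule: inc_induct)
  case base then show ?case using traj_facts(2)[OF assms(1)] by simp
next
  case (step m)
  have pm: "p m > 0" using traj_facts(3)[OF assms(1) step(2)] .
  have um: "u m \<ge> 0" using traj_u_nonneg[OF assms(1)] step(2) by simp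
  have "(\<Sum>j=Suc m..n. PP (xs p u) (Suc m) j) = PP (xs p u) (Suc m) (Suc m) + (\<Sum>j=Suc (Suc m)..n. PP (xs p u) (Suc m) j)"
    using step(2) by (simp add: sum.atLeast_Suc_atMost)
  also have "\<dots> = (1 / xs p u (Suc m)) * (1 + (\<Sum>j=Suc (Suc m)..n. PP (xs p u) (Suc (Suc m)) j))"
  proof -
    have "\<And>j. j \<in> {Suc (Suc m)..n} \<Longrightarrow> PP (xs p u) (Suc m) j = (1 / xs p u (Suc m)) * PP (xs p u) (Suc (Suc m)) j"
      using PP_split[of "Suc m" "Suc m"] by (simp add: PP_def)
    then show ?thesis by (simp add: PP_def sum_distrib_left distrib_left)
  qed
  also have "\<dots> = (1 + p (Suc m)) / xs p u (Suc m)" using step(3) by simp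
  also have "\<dots> = p m"
  proof -
    have d: "xs p u (Suc m) = p m * (1 + u m)" by (simp add: xs_def)
    have e: "1 + p (Suc m) = p m * (p m * (1 + u m))"
      using traj_facts(5)[OF assms(1) step(2)] by (simp add: power2_eq_square algebra_simps)
    have "1 + u m > 0" using um by simp
    then show ?thesis unfolding d e using pm by simp
  qed
  finally show ?case .
qed

lemma Q_lemma:
  assumes "is_trajectory n p u" "k \<in> {1..n}"
  shows "(\<Sum>i=1..k. \<Sum>j=k..n. PP (xs p u) i j) = xs p u k"
proof -
  obtain m where k: "k = Suc m" using assms(2) by (cases k) auto
  have mn: "m < n" using assms(2) k by simp
  have "(\<Sum>i=1..k. \<Sum>j=k..n. PP (xs p u) i j) = (\<Sum>i=1..k. PP (xs p u) i k * (1 + p k))"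
  proof (rule sum.cong[OF refl])
    fix i assume i: "i \<in> {1..k}"
    have "(\<Sum>j=k..n. PP (xs p u) i j) = (\<Sum>j=k..n. PP (xs p u) i k * PP (xs p u) (Suc k) j)"
      using i by (intro sum.cong[OF refl] PP_split) auto
    also have "\<dots> = PP (xs p u) i k * (\<Sum>j=k..n. PP (xs p u) (Suc k) j)" by (simp add: sum_distrib_left)
    also have "(\<Sum>j=k..n. PP (xs p u) (Suc k) j) = 1 + (\<Sum>j=Suc k..n. PP (xs p u) (Suc k) j)"
      using assms(2) by (simp add: sum.atLeast_Suc_atMost PP_def)
    also have "\<dots> = 1 + p k" using R_lemma[OF assms(1), of k] assms(2) by simp
    finally show "(\<Sum>j=k..n. PP (xs p u) i j) = PP (xs p u) i k * (1 + p k)" .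
  qed
  also have "\<dots> = u k * (1 + p k)"
    using S_lemma[OF assms(1), of k] assms(2) by (simp flip: sum_distrib_right)
  also have "\<dots> = xs p u k"
  proof -
    have pm: "p m > 0" using traj_facts(3)[OF assms(1) mn] .
    have "u k = 1 / p m" using traj_facts(4)[OF assms(1) mn] k by simp
    moreover have "1 + p k = p m ^ 2 * (u m + 1)" using traj_facts(5)[OF assms(1) mn] k by simp
    ultimately show ?thesis using pm k by (simp add: xs_def power2_eq_square field_simps)
  qed
  finally show ?thesis .
qed


lemma tri_swap:
  fixes h :: "nat \<Rightarrow> nat \<Rightarrow> real"
  shows "(\<Sum>i=a..n. \<Sum>k=i..n. h i k) = (\<Sum>k=a..n. \<Sum>i=a..k. h i k)"
proof (induction n)
  case 0 then show ?case by (cases a) auto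
next
  case (Suc n)
  show ?case
  proof (cases "Suc n < a")
    case True then show ?thesis by simp
  next
    case False
    have "(\<Sum>i=a..Suc n. \<Sum>k=i..Suc n. h i k) = (\<Sum>i=a..n. \<Sum>k=i..Suc n. h i k) + h (Suc n) (Suc n)"
      using False by simp
    also have "(\<Sum>i=a..n. \<Sum>k=i..Suc n. h i k) = (\<Sum>i=a..n. (\<Sum>k=i..n. h i k) + h i (Suc n))"
      by (intro sum.cong[OF refl]) auto
    also have "\<dots> = (\<Sum>i=a..n. \<Sum>k=i..n. h i k) + (\<Sum>i=a..n. h i (Suc n))" by (simp add: sum.distrib)
    finally show ?thesis using False Suc by simp
  qed
qed

lemma exch:
  fixes g :: "nat \<Rightarrow> nat \<Rightarrow> real"
  shows "(\<Sum>i=1..n. \<Sum>j=i..n. g i j * (\<Sum>k=i..j. y k)) = (\<Sum>k=1..n. y k * (\<Sum>i=1..k. \<Sum>j=k..n. g i j))"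
proof -
  have "(\<Sum>i=1..n. \<Sum>j=i..n. g i j * (\<Sum>k=i..j. y k)) = (\<Sum>i=1..n. \<Sum>j=i..n. \<Sum>k=i..j. g i j * y k)"
    by (simp add: sum_distrib_left)
  also have "\<dots> = (\<Sum>i=1..n. \<Sum>k=i..n. \<Sum>j=k..n. g i j * y k)"
    by (rule sum.cong[OF refl], rule tri_swap[symmetric])
  also have "\<dots> = (\<Sum>k=1..n. \<Sum>i=1..k. \<Sum>j=k..n. g i j * y k)"
    by (rule tri_swap)
  also have "\<dots> = (\<Sum>k=1..n. y k * (\<Sum>i=1..k. \<Sum>j=k..n. g i j))"
    by (simp add: sum_distrib_left sum_distrib_right mult.commute)
  finally show ?thesis .
qed

lemma f_fun_PP: "f_fun n x = (\<Sum>i=1..n. x i) + (\<Sum>i=1..n. \<Sum>j=i..n. PP x i j)"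
  by (simp add: f_fun_def PP_def)

lemma PP_pos: assumes "\<forall>k\<in>{i..j}. x k > 0" shows "PP x i j > 0"
  unfolding PP_def using assms by (intro prod_pos) auto

lemma PP_lower:
  assumes "\<forall>k\<in>{i..j}. x k > 0" "\<forall>k\<in>{i..j}. z k > 0"
  shows "PP x i j \<ge> PP z i j * (1 - (\<Sum>k=i..j. ln (x k / z k)))"
proof -
  have "PP x i j = (\<Prod>k=i..j. 1 / z k * (z k / x k))"
    unfolding PP_def
  proof (rule prod.cong[OF refl])
    fix k assume "k \<in> {i..j}"
    then have "x k > 0" "z k > 0" using assms by auto
    then show "1 / x k = 1 / z k * (z k / x k)" by simp
  qed
  also have "\<dots> = PP z i j * (\<Prod>k=i..j. z k / x k)" by (simp only: PP_def prod.distrib)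
  also have "(\<Prod>k=i..j. z k / x k) = (\<Prod>k=i..j. exp (- ln (x k / z k)))"
    using assms by (intro prod.cong[OF refl]) (simp add: exp_minus)
  also have "\<dots> = exp (\<Sum>k=i..j. - ln (x k / z k))" by (simp add: exp_sum)
  finally have eq: "PP x i j = PP z i j * exp (\<Sum>k=i..j. - ln (x k / z k))" .
  have "1 - (\<Sum>k=i..j. ln (x k / z k)) \<le> exp (\<Sum>k=i..j. - ln (x k / z k))"
    using exp_ge_add_one_self[of "\<Sum>k=i..j. - ln (x k / z k)"] by (simp add: sum_negf)
  moreover have "PP z i j > 0" using PP_pos assms(2) by blast
  ultimately show ?thesis unfolding eq by (simp add: mult_left_mono)
qed


lemma lower:
  assumes tr: "is_trajectory n p u" and pos: "\<forall>i\<in>{1..n}. x i > 0"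
  shows "f_fun n x \<ge> f_fun n (xs p u) + (\<Sum>k=1..n. x k - xs p u k - xs p u k * ln (x k / xs p u k))"
proof -
  define z where "z = xs p u"
  define y where "y k = ln (x k / z k)" for k
  have zpos: "\<forall>i\<in>{1..n}. z i > 0" using xs_pos[OF tr] z_def by blast
  have "(\<Sum>i=1..n. \<Sum>j=i..n. PP x i j) \<ge> (\<Sum>i=1..n. \<Sum>j=i..n. PP z i j * (1 - (\<Sum>k=i..j. y k)))"
    unfolding y_def using pos zpos by (intro sum_mono PP_lower) auto
  also have "(\<Sum>i=1..n. \<Sum>j=i..n. PP z i j * (1 - (\<Sum>k=i..j. y k)))
      = (\<Sum>i=1..n. \<Sum>j=i..n. PP z i j) - (\<Sum>i=1..n. \<Sum>j=i..n. PP z i j * (\<Sum>k=i..j. y k))"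
    by (simp add: right_diff_distrib sum_subtractf)
  also have "(\<Sum>i=1..n. \<Sum>j=i..n. PP z i j * (\<Sum>k=i..j. y k)) = (\<Sum>k=1..n. y k * (\<Sum>i=1..k. \<Sum>j=k..n. PP z i j))"
    by (rule exch)
  also have "\<dots> = (\<Sum>k=1..n. y k * z k)"
    using Q_lemma[OF tr] unfolding z_def by (intro sum.cong[OF refl]) auto
  finally have A: "(\<Sum>i=1..n. \<Sum>j=i..n. PP x i j) \<ge> (\<Sum>i=1..n. \<Sum>j=i..n. PP z i j) - (\<Sum>k=1..n. y k * z k)" .
  have B: "(\<Sum>k=1..n. x k - z k - z k * y k) = (\<Sum>k=1..n. x k) - (\<Sum>k=1..n. z k) - (\<Sum>k=1..n. y k * z k)"
    by (simp add: sum_subtractf mult.commute)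
  show ?thesis using A B unfolding f_fun_PP z_def[symmetric] y_def[symmetric] by linarith
qed

lemma lower_strict_term:
  fixes x z :: real
  assumes "x > 0" "z > 0" shows "x - z - z * ln (x / z) \<ge> 0" "x \<noteq> z \<Longrightarrow> x - z - z * ln (x / z) > 0"
proof -
  define y where "y = ln (x / z)"
  have "x / z > 0" using assms by (rule divide_pos_pos)
  then have "exp y = x / z" unfolding y_def by (rule exp_ln)
  then have x: "x = z * exp y" using assms by simp
  have "z * (1 + y) \<le> z * exp y" using exp_ge_add_one_self[of y] assms by (intro mult_left_mono) auto
  then show "x - z - z * ln (x / z) \<ge> 0"
    unfolding y_def[symmetric] x by (simp add: algebra_simps)
  assume "x \<noteq> z"
  then have "y \<noteq> 0" using x by auto
  then have "1 + y < exp y" by (rule exp_strict)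
  then have "z * (1 + y) < z * exp y" using assms by simp
  then show "x - z - z * ln (x / z) > 0" unfolding y_def[symmetric] x using assms by (simp add: algebra_simps)
qed

lemma minimizer:
  assumes tr: "is_trajectory n p u" and pos: "\<forall>i\<in>{1..n}. x i > 0"
  shows "f_fun n (xs p u) \<le> f_fun n x"
    and "(\<exists>k\<in>{1..n}. x k \<noteq> xs p u k) \<Longrightarrow> f_fun n (xs p u) < f_fun n x"
proof -
  have nn: "\<And>k. k\<in>{1..n} \<Longrightarrow> x k - xs p u k - xs p u k * ln (x k / xs p u k) \<ge> 0"
  proof -
    fix k assume k: "k \<in> {1..n}"
    show "x k - xs p u k - xs p u k * ln (x k / xs p u k) \<ge> 0"
      using lower_strict_term(1)[of "x k" "xs p u k"] pos xs_pos[OF tr k] k by auto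
  qed
  have "0 \<le> (\<Sum>k=1..n. x k - xs p u k - xs p u k * ln (x k / xs p u k))"
    by (rule sum_nonneg) (rule nn)
  then show "f_fun n (xs p u) \<le> f_fun n x"
    using lower[OF tr pos] by linarith
  assume "\<exists>k\<in>{1..n}. x k \<noteq> xs p u k"
  then obtain k where k: "k \<in> {1..n}" "x k \<noteq> xs p u k" by blast
  have "0 < x k - xs p u k - xs p u k * ln (x k / xs p u k)"
    using lower_strict_term(2) pos xs_pos[OF tr] k by blast
  also have "\<dots> \<le> (\<Sum>k=1..n. x k - xs p u k - xs p u k * ln (x k / xs p u k))"
    using k nn by (intro member_le_sum) auto
  finally show "f_fun n (xs p u) < f_fun n x" using lower[OF tr pos] by linarith
qed


lemma A_val_eq:
  assumes tr: "is_trajectory n p u"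
  shows "A_val n = f_fun n (xs p u)"
  unfolding A_val_def
proof (rule cInf_eq_minimum)
  show "f_fun n (xs p u) \<in> {f_fun n x |x. \<forall>i\<in>{1..n}. 0 < x i}"
    using xs_pos[OF tr] by blast
next
  fix v assume "v \<in> {f_fun n x |x. \<forall>i\<in>{1..n}. 0 < x i}"
  then obtain x where "v = f_fun n x" "\<forall>i\<in>{1..n}. 0 < x i" by blast
  then show "f_fun n (xs p u) \<le> v" using minimizer(1)[OF tr] by blast
qed

lemma C_val_eq:
  assumes tr: "is_trajectory n p u"
  shows "C_val n = (\<Sum>j<n. 3 - 2 * p j - p j * u j)"
proof -
  have "f_fun n (xs p u) = (\<Sum>i=1..n. xs p u i) + (\<Sum>i=1..n. p (i - 1))"
  proof -
    have "(\<Sum>i=1..n. \<Sum>j=i..n. PP (xs p u) i j) = (\<Sum>i=1..n. p (i - 1))"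
    proof (rule sum.cong[OF refl])
      fix i assume i: "i \<in> {1..n}"
      then obtain m where m: "i = Suc m" by (cases i) auto
      then show "(\<Sum>j=i..n. PP (xs p u) i j) = p (i - 1)" using R_lemma[OF tr, of m] i by simp
    qed
    then show ?thesis by (simp add: f_fun_PP)
  qed
  also have "\<dots> = (\<Sum>j<n. xs p u (Suc j)) + (\<Sum>j<n. p j)"
    by (simp add: sum.atLeast1_atMost_eq)
  also have "\<dots> = (\<Sum>j<n. 2 * p j + p j * u j)"
    by (simp add: xs_def sum.distrib[symmetric] algebra_simps)
  finally have "f_fun n (xs p u) = (\<Sum>j<n. 2 * p j + p j * u j)" .
  then show ?thesis unfolding C_val_def A_val_eq[OF tr] by (simp add: sum_subtractf sum.distrib)
qed

lemma rev_traj: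
  assumes tr: "is_trajectory n p u"
  shows "is_trajectory n (\<lambda>j. u (n - j)) (\<lambda>j. p (n - j))"
  unfolding is_trajectory_def
proof (intro conjI ballI allI impI)
  show "p (n - 0) = 0" using traj_facts(2)[OF tr] by simp
  show "u (n - n) = 0" using traj_facts(1)[OF tr] by simp
  fix j
  { assume "j < n"
    then show "0 < u (n - j)" using traj_u_pos[OF tr] by simp }
  assume j: "j \<in> {1..n}"
  define m where "m = n - j"
  have mn: "m < n" using j m_def by auto
  have e1: "n - (j - 1) = Suc m" using j m_def by auto
  have pm: "p m > 0" using traj_facts(3)[OF tr mn] .
  have um: "u m \<ge> 0" using traj_u_nonneg[OF tr] mn by simp
  have us: "u (Suc m) = 1 / p m" using traj_facts(4)[OF tr mn] .
  have ps: "p (Suc m) = p m ^ 2 * (u m + 1) - 1" using traj_facts(5)[OF tr mn] .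
  have "u m = (u (Suc m))^2 * (p (Suc m) + 1) - 1" using pm unfolding us ps by (simp add: power2_eq_square field_simps)
  moreover have "p m = 1 / u (Suc m)" using pm us by simp
  ultimately show "(u (n - j), p (n - j)) = Phi (u (n - (j - 1)), p (n - (j - 1)))"
    unfolding e1 m_def[symmetric] by (simp add: Phi_def)
qed


lemma u_rec:
  assumes tr: "is_trajectory n p u" "j < n"
  shows "u (Suc j) = (1 + u j) / xs p u (Suc j)"
proof -
  have "1 + u j > 0" using traj_u_nonneg[OF tr(1), of j] tr(2) by simp
  then show ?thesis using traj_facts(4)[OF tr] traj_facts(3)[OF tr] by (simp add: xs_def)
qed

lemma symmetry:
  assumes tr: "is_trajectory n p u" "j \<le> n"
  shows "p j = u (n - j)"
proof -
  define p' where "p' = (\<lambda>j. u (n - j))"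
  define u' where "u' = (\<lambda>j. p (n - j))"
  have tr': "is_trajectory n p' u'" unfolding p'_def u'_def by (rule rev_traj[OF tr(1)])
  have pos': "\<forall>i\<in>{1..n}. xs p' u' i > 0" using xs_pos[OF tr'] by blast
  have pos: "\<forall>i\<in>{1..n}. xs p u i > 0" using xs_pos[OF tr(1)] by blast
  have le1: "f_fun n (xs p u) \<le> f_fun n (xs p' u')" using minimizer(1)[OF tr(1) pos'] .
  have le2: "f_fun n (xs p' u') \<le> f_fun n (xs p u)" using minimizer(1)[OF tr' pos] .
  have same: "xs p' u' k = xs p u k" if "k \<in> {1..n}" for k
    using minimizer(2)[OF tr(1) pos'] le1 le2 that by force
  have "u i = u' i" if "i \<le> n" for i
    using that
  proof (induction i)
    case 0 then show ?case using traj_facts(1)[OF tr(1)] traj_facts(1)[OF tr'] by simp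
  next
    case (Suc i)
    then have "i < n" by simp
    then show ?case using u_rec[OF tr(1)] u_rec[OF tr'] same[of "Suc i"] Suc by simp
  qed
  then have "u (n - j) = u' (n - j)" by simp
  then show ?thesis using tr(2) by (simp add: u'_def)
qed


lemma step_id:
  assumes tr: "is_trajectory n p u" "j < n"
  shows "p (Suc j) * u (Suc j) = p j + p j * u j - u (Suc j)"
proof -
  have pm: "p j > 0" using traj_facts(3)[OF tr] .
  show ?thesis using pm unfolding traj_facts(4)[OF tr] traj_facts(5)[OF tr]
    by (simp add: power2_eq_square field_simps)
qed

lemma tele1:
  assumes tr: "is_trajectory n p u" shows "k \<le> n \<Longrightarrow> (\<Sum>j<k. p j - u (Suc j)) = p k * u k"
proof (induction k)
  case 0 then show ?case using traj_facts(1)[OF tr] by simp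
next
  case (Suc k) then show ?case using step_id[OF tr, of k] by simp
qed

lemma tele2:
  assumes tr: "is_trajectory n p u" shows "(\<Sum>j<k. u j - u (Suc j)) = - u k"
  by (induction k) (use traj_facts(1)[OF tr] in auto)

lemma rev_sum:
  fixes f :: "nat \<Rightarrow> real"
  shows "k \<le> n \<Longrightarrow> (\<Sum>i<k. f (n - 1 - i)) = (\<Sum>j=n-k..<n. f j)"
proof (induction k)
  case 0 then show ?case by simp
next
  case (Suc k)
  have "{n - Suc k..<n} = insert (n - Suc k) {n-k..<n}" using Suc.prems by auto
  moreover have "n - Suc k \<notin> {n-k..<n}" using Suc.prems by auto
  moreover have "n - 1 - k = n - Suc k" by simp
  ultimately show ?case using Suc by simp
qed

theorem lemma12:
  fixes n :: nat and p u :: "nat \<Rightarrow> real"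
  assumes "n \<ge> 1"
    and "is_trajectory n p u"
  defines "k \<equiv> n div 2"
  defines "lam \<equiv> (\<lambda>j. 1 - u j)"
  defines "\<delta> \<equiv> 1 - (p k - 1)^2"
  shows "C_val n = 2 * (\<Sum>j<k. 3 - p j + u j - 2 * u (j + 1) - p j * u j) + \<delta>
       \<and> C_val n = 2 * (\<Sum>j=1..k. lam j * (lam (j - 1) - 2 * lam j) / u j) + \<delta>"
proof -
  note tr = assms(2)
  define a where "a j = 3 - 2 * p j - p j * u j" for j
  have kn: "k \<le> n" unfolding k_def by simp
  have C: "C_val n = (\<Sum>j<n. a j)" unfolding C_val_eq[OF tr] a_def ..
  have rfl: "a (n - 1 - i) = a i + (p i - u (Suc i))" if i: "i < n" for i
  proof -
    have e1: "p (n - 1 - i) = u (Suc i)" using symmetry[OF tr, of "n - 1 - i"] i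
      by (simp add: Suc_diff_Suc[symmetric])
    have e2: "u (n - 1 - i) = p (Suc i)" using symmetry[OF tr, of "Suc i"] i by simp
    show ?thesis unfolding a_def e1 e2 using step_id[OF tr i] by (simp add: algebra_simps)
  qed
  have splt: "(\<Sum>j<n. a j) = (\<Sum>j<k. a j) + (\<Sum>j=k..<n. a j)"
    using sum.atLeastLessThan_concat[of 0 k n a] kn by (simp add: atLeast0LessThan)
  have bck: "(\<Sum>j=n-k..<n. a j) = (\<Sum>j<k. a j) + p k * u k"
  proof -
    have "(\<Sum>j=n-k..<n. a j) = (\<Sum>i<k. a (n - 1 - i))" using rev_sum[OF kn] by simp
    also have "\<dots> = (\<Sum>i<k. a i + (p i - u (Suc i)))" using kn by (intro sum.cong[OF refl] rfl) auto
    also have "\<dots> = (\<Sum>j<k. a j) + p k * u k" using tele1[OF tr kn] by (simp add: sum.distrib)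
    finally show ?thesis .
  qed
  have bsum: "(\<Sum>j<k. 3 - p j + u j - 2 * u (j + 1) - p j * u j) = (\<Sum>j<k. a j) + p k * u k - u k"
  proof -
    have "(\<Sum>j<k. 3 - p j + u j - 2 * u (j + 1) - p j * u j) = (\<Sum>j<k. a j + (p j - u (Suc j)) + (u j - u (Suc j)))"
      by (intro sum.cong[OF refl]) (simp add: a_def)
    also have "\<dots> = (\<Sum>j<k. a j) + (\<Sum>j<k. p j - u (Suc j)) + (\<Sum>j<k. u j - u (Suc j))"
      by (simp only: sum.distrib)
    also have "\<dots> = (\<Sum>j<k. a j) + p k * u k - u k" using tele1[OF tr kn] tele2[OF tr, of k] by simp
    finally show ?thesis .
  qed
  have first: "C_val n = 2 * (\<Sum>j<k. 3 - p j + u j - 2 * u (j + 1) - p j * u j) + \<delta>"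
  proof (cases "even n")
    case True
    then have nk: "n - k = k" unfolding k_def by auto
    have pk: "p k = u k" using symmetry[OF tr kn] nk by simp
    have "C_val n = 2 * (\<Sum>j<k. a j) + p k * u k" using C splt bck nk by simp
    then show ?thesis unfolding bsum \<delta>_def pk by (simp add: power2_eq_square algebra_simps)
  next
    case False
    then have nk: "n - k = Suc k" unfolding k_def by presburger
    have kl: "k < n" using nk by simp
    have pk1: "p k = u (Suc k)" using symmetry[OF tr kn] nk by simp
    have "p k * u (Suc k) = 1" using traj_pu[OF tr kl] .
    moreover have "p k > 0" using traj_facts(3)[OF tr kl] .
    ultimately have pk: "p k = 1"
    proof -
      assume h1: "p k * u (Suc k) = 1" and h2: "p k > 0"
      have "(p k - 1) * (p k + 1) = 0" using h1 unfolding pk1[symmetric] by (simp add: algebra_simps)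
      moreover have "p k + 1 \<noteq> 0" using h2 by simp
      ultimately show "p k = 1" by simp
    qed
    have "(\<Sum>j=k..<n. a j) = a k + (\<Sum>j=n-k..<n. a j)"
      using kl nk by (simp add: sum.atLeast_Suc_lessThan)
    then have "C_val n = 2 * (\<Sum>j<k. a j) + a k + p k * u k" using C splt bck by simp
    then show ?thesis unfolding bsum \<delta>_def using pk by (simp add: a_def algebra_simps)
  qed
  have second: "(\<Sum>j=1..k. lam j * (lam (j - 1) - 2 * lam j) / u j) = (\<Sum>j<k. 3 - p j + u j - 2 * u (j + 1) - p j * u j)"
  proof -
    have "(\<Sum>j=1..k. lam j * (lam (j - 1) - 2 * lam j) / u j) = (\<Sum>j<k. lam (Suc j) * (lam j - 2 * lam (Suc j)) / u (Suc j))"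
      by (simp add: sum.atLeast1_atMost_eq)
    also have "\<dots> = (\<Sum>j<k. 3 - p j + u j - 2 * u (j + 1) - p j * u j)"
    proof (rule sum.cong[OF refl])
      fix j assume "j \<in> {..<k}"
      then have jn: "j < n" using kn by auto
      have pj: "p j > 0" using traj_facts(3)[OF tr jn] .
      show "lam (Suc j) * (lam j - 2 * lam (Suc j)) / u (Suc j) = 3 - p j + u j - 2 * u (j + 1) - p j * u j"
      proof -
        have us: "u (Suc j) > 0" using traj_u_pos[OF tr, of "Suc j"] jn by simp
        have pj': "p j = 1 / u (Suc j)" using traj_facts(4)[OF tr jn] pj by simp
        show ?thesis unfolding lam_def pj' using us by (simp add: field_simps)
      qed
    qed
    finally show ?thesis .
  qed
  show ?thesis using first second by simp
qed

end
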